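(* Let $|p|<1$, let $n\ge0$ be an integer, and let $a,b,c,d,e,f,q,r,s,t,u,v,w$ be nonzero complex numbers with $a^3v^n=bcdef$ and $w^3=qrstuv$, such that all expressions below are well defined. Then \begin{align*} &\sum_{k=0}^n\frac{\theta\big(aw^k,\,a(w/tu)^k/(ef),\,a^2(uv/w)^k/(bcde),\,a^2(tv/w)^k/(bcdf),\,a^2/(bcd);p\big)}{\theta\big(a,\,a/(ef),\,a^2/(bcde),\,a^2/(bcdf),\,a^2(tuv/w)^k/(bcd);p\big)}\\ &\quad\times\frac{(b;q,p)_k(c;r,p)_k(d;s,p)_k(e;t,p)_k(f;u,p)_k(v^{-n};v,p)_k}{(a/b;w/q,p)_k(a/c;w/r,p)_k(a/d;w/s,p)_k(aw/(et);w/t,p)_k(aw/(fu);w/u,p)_k(awv^{n-1};w/v,p)_k}\,(w/v)^k\\ &\quad\times\Bigg[1-\frac{\theta\big(a(w/rs)^k/(cd),a(w/qs)^k/(bd),a(w/qr)^k/(bc);p\big)}{\theta\big(a(w/q)^k/b,a(w/r)^k/c,a(w/s)^k/d;p\big)}\cdot\frac{\theta\big(et^k,fu^k,v^{k-n};p\big)}{\theta\big(f(u/w)^kv^{k-n}/a,\,e(t/w)^kv^{k-n}/a,\,ef(tu/w)^k/a;p\big)}\Bigg]\\ &=\frac{\theta\big(a/e,\,a/f,\,v^{-n}/a,\,efv^{-n}/a;p\big)}{\theta\big(ev^{-n}/a,\,fv^{-n}/a,\,a,\,a/(ef);p\big)}. \end{align*}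
   Context: For $|p|<1$ and $x\neq 0$, $\theta(x;p)=(x;p)_\infty(p/x;p)_\infty$ where $(x;p)_\infty=\prod_{k\ge 0}(1-xp^k)$, and $\theta(x_1,\dots,x_m;p)=\prod_{i=1}^m\theta(x_i;p)$. For $a\ne0$ and integer $k\ge0$, $(a;q,p)_k=\prod_{j=0}^{k-1}\theta(aq^j;p)$ (empty product $=1$). Here e.g. $(w/tu)^k$ means $(w/(tu))^k$. *)

theory Defs
  imports "HOL-Analysis.Analysis"
begin

definition qpinf :: "complex \<Rightarrow> complex \<Rightarrow> complex" where
  "qpinf x p = prodinf (\<lambda>k. 1 - x * p ^ k)"

definition theta :: "complex \<Rightarrow> complex \<Rightarrow> complex" where
  "theta x p = qpinf x p * qpinf (p / x) p"

definition epoch :: "complex \<Rightarrow> complex \<Rightarrow> complex \<Rightarrow> nat \<Rightarrow> complex" where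
  "epoch a q p k = (\<Prod>j<k. theta (a * q ^ j) p)"

end

theory Submission
  imports Defs "HOL-Complex_Analysis.Complex_Analysis"
begin



lemma qp_conv:
  fixes x p :: complex
  assumes "norm p < 1"
  shows "convergent_prod (\<lambda>k. 1 - x * p ^ k)"
proof -
  have "summable (\<lambda>k. norm x * norm p ^ k)"
    using assms by (intro summable_mult summable_geometric) auto
  hence "summable (\<lambda>k. norm ((1 - x * p ^ k) - 1))"
    by (simp add: norm_mult norm_power)
  hence "abs_convergent_prod (\<lambda>k. 1 - x * p ^ k)"
    by (rule summable_imp_abs_convergent_prod)
  thus ?thesis by (rule abs_convergent_prod_imp_convergent_prod)
qed

lemma qpinf_shift:
  assumes "norm p < 1"
  shows "qpinf x p = (1 - x) * qpinf (x * p) p"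
proof -
  have "(\<lambda>k. 1 - (x*p) * p ^ k) has_prod qpinf (x*p) p"
    unfolding qpinf_def using qp_conv[OF assms] by (rule convergent_prod_has_prod)
  hence "(\<lambda>k. 1 - x * p ^ (Suc k)) has_prod qpinf (x*p) p"
    by (simp add: ac_simps)
  hence "(\<lambda>k. 1 - x * p ^ k) has_prod (qpinf (x*p) p * (1 - x * p ^ 0))"
    by (rule has_prod_Suc_imp)
  hence "prodinf (\<lambda>k. 1 - x * p ^ k) = qpinf (x*p) p * (1 - x * p ^ 0)"
    by (rule has_prod_unique[symmetric])
  thus ?thesis unfolding qpinf_def by (simp add: mult.commute)
qed

lemma qpinf_zero_iff:
  assumes "norm p < 1"
  shows "qpinf x p = 0 \<longleftrightarrow> (\<exists>k. x * p ^ k = 1)"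
proof -
  have "(\<lambda>k. 1 - x * p ^ k) has_prod qpinf x p"
    unfolding qpinf_def using qp_conv[OF assms] by (rule convergent_prod_has_prod)
  hence "qpinf x p = 0 \<longleftrightarrow> 0 \<in> range (\<lambda>k. 1 - x * p ^ k)" by (rule has_prod_eq_0_iff)
  also have "\<dots> \<longleftrightarrow> (\<exists>k. x * p ^ k = 1)"
  proof
    assume "0 \<in> range (\<lambda>k. 1 - x * p ^ k)"
    then obtain k where "0 = 1 - x * p ^ k" by blast
    hence "1 - x * p ^ k = 0" by (rule sym)
    hence "x * p ^ k = 1" by (metis right_minus_eq)
    thus "\<exists>k. x * p ^ k = 1" by blast
  next
    assume "\<exists>k. x * p ^ k = 1"
    then obtain k where "x * p ^ k = 1" by blast
    hence "0 = 1 - x * p ^ k" by simp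
    thus "0 \<in> range (\<lambda>k. 1 - x * p ^ k)" by blast
  qed
  finally show ?thesis .
qed

lemma qpinf_0: "qpinf 0 p = 1"
  unfolding qpinf_def by simp

lemma theta_p0: "theta x 0 = 1 - x"
proof -
  have "qpinf x 0 = (1 - x) * qpinf (x*0) 0" by (rule qpinf_shift) simp
  thus ?thesis unfolding theta_def by (simp add: qpinf_0)
qed

lemma theta_1:
  assumes "norm p < 1" shows "theta 1 p = 0"
  unfolding theta_def using qpinf_shift[OF assms, of 1] by simp

lemma theta_inv:
  assumes "norm p < 1" "x \<noteq> 0"
  shows "theta (1 / x) p = - theta x p / x"
proof -
  have a: "qpinf (1/x) p = (1 - 1/x) * qpinf (p/x) p"
    using qpinf_shift[OF assms(1), of "1/x"] by simp
  have b: "qpinf x p = (1 - x) * qpinf (x*p) p" by (rule qpinf_shift[OF assms(1)])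
  have c: "p / (1/x) = x * p" by simp
  have d: "(1 - 1/x) = - (1 - x) / x" using assms(2) by (simp add: field_simps)
  show ?thesis unfolding theta_def a b c d by (simp add: algebra_simps)
qed

lemma theta_mult_p:
  assumes "norm p < 1" "x \<noteq> 0" "p \<noteq> 0"
  shows "theta (p * x) p = - theta x p / x"
proof -
  have a: "qpinf (1/x) p = (1 - 1/x) * qpinf (p/x) p"
    using qpinf_shift[OF assms(1), of "1/x"] by simp
  have b: "qpinf x p = (1 - x) * qpinf (x*p) p" by (rule qpinf_shift[OF assms(1)])
  have c: "p / (p * x) = 1 / x" using assms by simp
  have d: "(1 - 1/x) = - (1 - x) / x" using assms(2) by (simp add: field_simps)
  show ?thesis unfolding theta_def a b c d by (simp add: algebra_simps)
qed




lemma qpinf_ulim: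
  fixes p :: complex
  assumes "norm p < 1"
  shows "uniform_limit (cball 0 R) (\<lambda>n x. \<Prod>k<n. 1 - x * p ^ k) (\<lambda>x. qpinf x p) sequentially"
proof -
  have "uniformly_convergent_on (cball 0 R) (\<lambda>N x. \<Sum>n<N. norm ((1 - x * p ^ n) - 1))"
  proof (rule Weierstrass_m_test'[where M = "\<lambda>n. R * norm p ^ n"])
    fix n and x :: complex assume "x \<in> cball 0 R"
    hence "norm x \<le> R" by simp
    hence "norm x * norm p ^ n \<le> R * norm p ^ n"
      by (intro mult_right_mono) auto
    thus "norm (norm ((1 - x * p ^ n) - 1)) \<le> R * norm p ^ n"
      by (simp add: norm_mult norm_power)
  next
    show "summable (\<lambda>n. R * norm p ^ n)"
      using assms by (intro summable_mult summable_geometric) auto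
  qed
  hence uc: "uniformly_convergent_on (cball 0 R) (\<lambda>N x. \<Prod>n<N. 1 - x * p ^ n)"
    by (intro uniformly_convergent_on_prod') (auto intro!: continuous_intros)
  hence "uniform_limit (cball 0 R) (\<lambda>N x. \<Prod>n<N. 1 - x * p ^ n)
           (\<lambda>x. lim (\<lambda>N. \<Prod>n<N. 1 - x * p ^ n)) sequentially"
    by (simp add: uniformly_convergent_uniform_limit_iff)
  moreover have "lim (\<lambda>N. \<Prod>n<N. 1 - x * p ^ n) = qpinf x p" for x
    using has_prod_imp_tendsto'[OF convergent_prod_has_prod[OF qp_conv[OF assms]]]
    unfolding qpinf_def by (rule limI)
  ultimately show ?thesis by simp
qed

lemma qpinf_holo_UNIV:
  fixes p :: complex
  assumes "norm p < 1"
  shows "(\<lambda>x. qpinf x p) holomorphic_on UNIV"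
proof -
  have hb: "(\<lambda>x. qpinf x p) holomorphic_on ball 0 R" for R
  proof -
    have ev: "\<forall>\<^sub>F n in sequentially. continuous_on (cball 0 R) (\<lambda>x. \<Prod>k<n. 1 - x * p ^ k)
                 \<and> (\<lambda>x. \<Prod>k<n. 1 - x * p ^ k) holomorphic_on ball 0 R"
      by (intro always_eventually allI conjI) (auto intro!: continuous_intros holomorphic_intros)
    show ?thesis
      by (rule holomorphic_uniform_limit[OF ev qpinf_ulim[OF assms]]) auto
  qed
  have "(\<lambda>x. qpinf x p) analytic_on UNIV"
    unfolding analytic_on_def
  proof
    fix z :: complex
    have "ball z 1 \<subseteq> ball 0 (norm z + 1)"
    proof
      fix w assume "w \<in> ball z 1"
      hence "norm (w - z) < 1" by (simp add: dist_norm norm_minus_commute)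
      moreover have "norm w \<le> norm z + norm (w - z)" using norm_triangle_sub[of w z] by simp
      ultimately show "w \<in> ball 0 (norm z + 1)" by simp
    qed
    hence "(\<lambda>x. qpinf x p) holomorphic_on ball z 1"
      by (rule holomorphic_on_subset[OF hb])
    thus "\<exists>e>0. (\<lambda>x. qpinf x p) holomorphic_on ball z e"
      by (intro exI[of _ 1]) auto
  qed
  thus ?thesis by (rule analytic_imp_holomorphic)
qed

lemma qpinf_holo [holomorphic_intros]:
  fixes p :: complex
  assumes "norm p < 1" "f holomorphic_on A"
  shows "(\<lambda>x. qpinf (f x) p) holomorphic_on A"
proof -
  have "((\<lambda>x. qpinf x p) \<circ> f) holomorphic_on A"
    by (rule holomorphic_on_compose_gen[OF assms(2) qpinf_holo_UNIV[OF assms(1)]]) auto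
  thus ?thesis by (simp add: o_def)
qed

lemma theta_holo [holomorphic_intros]:
  fixes p :: complex
  assumes "norm p < 1" "f holomorphic_on A" "\<And>x. x \<in> A \<Longrightarrow> f x \<noteq> 0"
  shows "(\<lambda>x. theta (f x) p) holomorphic_on A"
  unfolding theta_def using assms by (intro holomorphic_intros) auto

lemma theta_cont [continuous_intros]:
  fixes p :: complex
  assumes "norm p < 1" "f holomorphic_on A" "\<And>x. x \<in> A \<Longrightarrow> f x \<noteq> 0"
  shows "continuous_on A (\<lambda>x. theta (f x) p)"
  by (intro holomorphic_on_imp_continuous_on theta_holo assms) auto




lemma theta_eq:
  assumes "norm p < 1"
  shows "theta z p = (1 - z) * qpinf (z * p) p * qpinf (p / z) p"
  unfolding theta_def using qpinf_shift[OF assms, of z] by simp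

lemma qpinf_p_nz:
  fixes p :: complex
  assumes "norm p < 1"
  shows "qpinf p p \<noteq> 0"
proof
  assume "qpinf p p = 0"
  then obtain k where k: "p * p ^ k = 1" using qpinf_zero_iff[OF assms] by auto
  have "norm p ^ Suc k < 1"
  proof (cases "norm p = 0")
    case True thus ?thesis by simp
  next
    case False thus ?thesis using assms by (intro power_Suc_less_one) auto
  qed
  moreover have "norm (p * p ^ k) = norm p ^ Suc k" by (simp add: norm_mult norm_power)
  ultimately show False using k by simp
qed

lemma theta_zero_iff:
  fixes p x :: complex
  assumes p: "norm p < 1" "p \<noteq> 0" and x: "x \<noteq> 0"
  shows "theta x p = 0 \<longleftrightarrow> (\<exists>k::int. x = p powi k)"
proof
  assume "theta x p = 0"
  hence "qpinf x p = 0 \<or> qpinf (p / x) p = 0" unfolding theta_def by simp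
  thus "\<exists>k::int. x = p powi k"
  proof
    assume "qpinf x p = 0"
    then obtain k where k: "x * p ^ k = 1" using qpinf_zero_iff[OF p(1)] by auto
    hence "x = inverse (p ^ k)" using p(2) by (simp add: field_simps)
    hence "x = p powi (- int k)" by (simp add: power_int_minus)
    thus ?thesis by blast
  next
    assume "qpinf (p / x) p = 0"
    then obtain k where k: "p / x * p ^ k = 1" using qpinf_zero_iff[OF p(1)] by auto
    hence "x = p ^ Suc k" using x by (simp add: field_simps)
    hence "x = p powi (int (Suc k))" by (simp only: power_int_of_nat)
    thus ?thesis by blast
  qed
next
  assume "\<exists>k::int. x = p powi k"
  then obtain k :: int where k: "x = p powi k" by blast
  show "theta x p = 0"
  proof (cases "k \<le> 0")
    case True
    then obtain m :: nat where m: "k = - int m" by (metis minus_minus nonpos_int_cases)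
    hence "x = inverse (p ^ m)" using k by (simp add: power_int_minus)
    hence "x * p ^ m = 1" using p(2) by simp
    hence "qpinf x p = 0" using qpinf_zero_iff[OF p(1)] by auto
    thus ?thesis unfolding theta_def by simp
  next
    case False
    then obtain m :: nat where m: "k = int (Suc m)" by (metis not_le pos_int_cases of_nat_Suc zero_less_imp_eq_int
          gr0_conv_Suc of_nat_0_less_iff)
    hence "x = p ^ Suc m" using k by (simp only: power_int_of_nat)
    hence "p / x * p ^ m = 1" using p(2) by simp
    hence "qpinf (p / x) p = 0" using qpinf_zero_iff[OF p(1)] by auto
    thus ?thesis unfolding theta_def by simp
  qed
qed

lemma theta_deriv_1:
  fixes p :: complex
  assumes p: "norm p < 1" and p0: "p \<noteq> 0"
  shows "\<exists>d. d \<noteq> 0 \<and> ((\<lambda>z. theta z p) has_field_derivative d) (at 1)"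
proof -
  define R where "R = (\<lambda>z. qpinf (z * p) p * qpinf (p / z) p)"
  have eq: "(\<lambda>z. theta z p) = (\<lambda>z. (1 - z) * R z)"
    unfolding R_def using theta_eq[OF p] by (auto simp: mult.assoc)
  have "R holomorphic_on (- {0})" unfolding R_def using p p0 by (intro holomorphic_intros) auto
  hence dR: "(R has_field_derivative deriv R 1) (at 1)"
    by (intro holomorphic_derivI[where S = "- {0}"]) auto
  have "((\<lambda>z. (1 - z) * R z) has_field_derivative (-1) * R 1 + deriv R 1 * (1 - 1)) (at 1)"
    by (intro DERIV_mult dR derivative_eq_intros) auto
  moreover have "R 1 = qpinf p p * qpinf p p" unfolding R_def by simp
  ultimately have "((\<lambda>z. theta z p) has_field_derivative - (qpinf p p * qpinf p p)) (at 1)"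
    unfolding eq by simp
  moreover have "- (qpinf p p * qpinf p p) \<noteq> 0" using qpinf_p_nz[OF p] by simp
  ultimately show ?thesis by blast
qed

lemma theta_deriv_up:
  fixes p w d :: complex
  assumes p: "norm p < 1" "p \<noteq> 0" and w: "w \<noteq> 0" "theta w p = 0"
    and dT: "((\<lambda>z. theta z p) has_field_derivative d) (at w)"
  shows "((\<lambda>z. theta z p) has_field_derivative (- d / (p * w))) (at (p * w))"
proof -
  have dT': "((\<lambda>z. theta z p) has_field_derivative d) (at ((p * w) / p))" using dT p by simp
  have "((\<lambda>z. z / p) has_field_derivative 1 / p) (at (p * w))"
    using p by (auto intro!: derivative_eq_intros)
  from DERIV_chain2[OF dT' this]
  have h1: "((\<lambda>z. theta (z / p) p) has_field_derivative d * (1 / p)) (at (p * w))" .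
  have h2: "((\<lambda>z. (- p) * theta (z / p) p) has_field_derivative (- p) * (d * (1 / p))) (at (p * w))"
    by (rule DERIV_cmult[OF h1])
  have h3: "((\<lambda>z. (- p) * theta (z / p) p / z) has_field_derivative
      (((- p) * (d * (1 / p))) * (p * w) - ((- p) * theta ((p * w) / p) p) * 1) / ((p * w) * (p * w))) (at (p * w))"
    by (rule DERIV_divide[OF h2 DERIV_ident]) (use p w in auto)
  have val: "(((- p) * (d * (1 / p))) * (p * w) - ((- p) * theta ((p * w) / p) p) * 1) / ((p * w) * (p * w))
      = - d / (p * w)" using p w by (simp add: field_simps)
  have h4: "((\<lambda>z. (- p) * theta (z / p) p / z) has_field_derivative (- d / (p * w))) (at (p * w))"
    using h3 val by simp
  show ?thesis
  proof (rule has_field_derivative_transform_within_open[OF h4, of "- {0}"])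
    fix z :: complex assume z: "z \<in> - {0}"
    have "theta (p * (z / p)) p = - theta (z / p) p / (z / p)"
      by (rule theta_mult_p) (use p z in auto)
    thus "(- p) * theta (z / p) p / z = theta z p" using p z by (simp add: field_simps)
  qed (use p w in auto)
qed

lemma theta_deriv_down:
  fixes p w d :: complex
  assumes p: "norm p < 1" "p \<noteq> 0" and w: "w \<noteq> 0" "theta w p = 0"
    and dT: "((\<lambda>z. theta z p) has_field_derivative d) (at w)"
  shows "((\<lambda>z. theta z p) has_field_derivative (- w * d)) (at (w / p))"
proof -
  have dT': "((\<lambda>z. theta z p) has_field_derivative d) (at (p * (w / p)))" using dT p by simp
  have "((\<lambda>z. p * z) has_field_derivative p) (at (w / p))"
    by (auto intro!: derivative_eq_intros)
  from DERIV_chain2[OF dT' this]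
  have h1: "((\<lambda>z. theta (p * z) p) has_field_derivative d * p) (at (w / p))" .
  have h2: "((\<lambda>z. (- z) * theta (p * z) p) has_field_derivative
       (-1) * theta (p * (w / p)) p + (d * p) * (- (w / p))) (at (w / p))"
    by (rule DERIV_mult[OF _ h1]) (auto intro!: derivative_eq_intros)
  have val: "(-1) * theta (p * (w / p)) p + (d * p) * (- (w / p)) = - w * d"
    using p w by (simp add: field_simps)
  have h4: "((\<lambda>z. (- z) * theta (p * z) p) has_field_derivative (- w * d)) (at (w / p))"
    using h2 val by simp
  show ?thesis
  proof (rule has_field_derivative_transform_within_open[OF h4, of "- {0}"])
    fix z :: complex assume z: "z \<in> - {0}"
    have "theta (p * z) p = - theta z p / z"
      by (rule theta_mult_p) (use p z in auto)
    thus "(- z) * theta (p * z) p = theta z p" using p z by (simp add: field_simps)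
  qed (use p w in auto)
qed

lemma theta_deriv_nz:
  fixes p x :: complex
  assumes p: "norm p < 1" "p \<noteq> 0" and x: "x \<noteq> 0" "theta x p = 0"
  shows "\<exists>d. d \<noteq> 0 \<and> ((\<lambda>z. theta z p) has_field_derivative d) (at x)"
proof -
  obtain k :: int where k: "x = p powi k" using theta_zero_iff[OF p x(1)] x(2) by blast
  have "\<exists>d. d \<noteq> 0 \<and> ((\<lambda>z. theta z p) has_field_derivative d) (at (p powi j))" for j :: int
  proof (induction j rule: int_induct[where k = 0])
    case base thus ?case using theta_deriv_1[OF p] by simp
  next
    case (step1 i)
    then obtain d where d: "d \<noteq> 0" "((\<lambda>z. theta z p) has_field_derivative d) (at (p powi i))" by blast
    have nz: "p powi i \<noteq> 0" using p by simp
    have z: "theta (p powi i) p = 0" using theta_zero_iff[OF p nz] by blast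
    have eq: "p powi (i + 1) = p * p powi i" using p by (simp add: power_int_add_1')
    have "((\<lambda>z. theta z p) has_field_derivative (- d / (p * p powi i))) (at (p * p powi i))"
      by (rule theta_deriv_up[OF p nz z d(2)])
    moreover have "- d / (p * p powi i) \<noteq> 0" using d(1) nz p by simp
    ultimately show ?case unfolding eq by blast
  next
    case (step2 i)
    then obtain d where d: "d \<noteq> 0" "((\<lambda>z. theta z p) has_field_derivative d) (at (p powi i))" by blast
    have nz: "p powi i \<noteq> 0" using p by simp
    have z: "theta (p powi i) p = 0" using theta_zero_iff[OF p nz] by blast
    have eq: "p powi (i - 1) = p powi i / p" using p by (simp add: power_int_diff)
    have "((\<lambda>z. theta z p) has_field_derivative (- (p powi i) * d)) (at (p powi i / p))"
      by (rule theta_deriv_down[OF p nz z d(2)])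
    moreover have "- (p powi i) * d \<noteq> 0" using d(1) nz p by simp
    ultimately show ?case unfolding eq by blast
  qed
  thus ?thesis using k by simp
qed




lemma exists_int_annulus:
  fixes a r :: real
  assumes a: "0 < a" "a < 1" and r: "0 < r"
  shows "\<exists>k::int. a \<le> a powi k * r \<and> a powi k * r \<le> 1"
proof -
  define L where "L = ln a"
  have L: "L < 0" unfolding L_def using a by simp
  define t where "t = ln r / (- L)"
  define k where "k = ceiling t"
  have k1: "t \<le> of_int k" and k2: "of_int k < t + 1" unfolding k_def by linarith+
  have "t * (- L) \<le> of_int k * (- L)" using k1 L by (intro mult_right_mono) auto
  moreover have "t * (- L) = ln r" unfolding t_def using L by simp
  ultimately have e1: "ln r \<le> of_int k * (- L)" by simp
  have "of_int k * (- L) < (t + 1) * (- L)" using k2 L by (intro mult_strict_right_mono) auto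
  moreover have "(t + 1) * (- L) = ln r + (- L)" unfolding t_def using L by (simp add: field_simps)
  ultimately have e2: "of_int k * (- L) < ln r + (- L)" by simp
  have eq: "a powi k * r = exp (of_int k * L + ln r)"
  proof -
    have "a powi k = exp L powi k" unfolding L_def using a by simp
    also have "\<dots> = exp (of_int k * L)" by (rule exp_power_int)
    finally show ?thesis using r by (simp add: exp_add)
  qed
  have "of_int k * L + ln r \<le> 0" using e1 by simp
  hence "a powi k * r \<le> 1" unfolding eq by simp
  moreover have "L \<le> of_int k * L + ln r" using e2 by simp
  hence "a \<le> a powi k * r" unfolding eq using a L_def by (metis exp_le_cancel_iff exp_ln)
  ultimately show ?thesis by blast
qed

lemma div_div_cancel: "(c::complex) \<noteq> 0 \<Longrightarrow> (a / c) / (b / c) = a / b"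
  by (cases "b = 0") (simp_all add: field_simps)

lemma powi_transfer_zero:
  fixes p w :: complex and F :: "complex \<Rightarrow> complex"
  assumes p: "p \<noteq> 0" and qF: "\<And>x. x \<noteq> 0 \<Longrightarrow> F (p * x) = F x / x ^ 2"
    and w: "w \<noteq> 0" "F w = 0"
  shows "F (p powi k * w) = 0"
proof (induction k rule: int_induct[where k = 0])
  case base thus ?case using w by simp
next
  case (step1 i)
  have nz: "p powi i * w \<noteq> 0" using p w by simp
  have e: "p powi (i + 1) * w = p * (p powi i * w)"
  proof -
    have "p powi (i + 1) = p * p powi i" using p by (simp add: power_int_add_1')
    thus ?thesis by (simp add: mult.assoc)
  qed
  show ?case unfolding e using qF[OF nz] step1 by simp
next
  case (step2 i)
  define z where "z = p powi (i - 1) * w"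
  have nz: "z \<noteq> 0" using p w unfolding z_def by simp
  have "p * z = p powi i * w" unfolding z_def using p by (simp add: power_int_diff field_simps)
  hence "F (p powi i * w) = F z / z ^ 2" using qF[OF nz] by simp
  thus ?case using step2 nz unfolding z_def[symmetric] by simp
qed

lemma powi_transfer_eq:
  fixes p w :: complex and G :: "complex \<Rightarrow> complex"
  assumes p: "p \<noteq> 0" and qG: "\<And>x. x \<noteq> 0 \<Longrightarrow> G (p * x) = G x"
    and w: "w \<noteq> 0"
  shows "G (p powi k * w) = G w"
proof (induction k rule: int_induct[where k = 0])
  case base thus ?case by simp
next
  case (step1 i)
  have nz: "p powi i * w \<noteq> 0" using p w by simp
  have e: "p powi (i + 1) * w = p * (p powi i * w)"
  proof -
    have "p powi (i + 1) = p * p powi i" using p by (simp add: power_int_add_1')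
    thus ?thesis by (simp add: mult.assoc)
  qed
  show ?case unfolding e using qG[OF nz] step1 by simp
next
  case (step2 i)
  define z where "z = p powi (i - 1) * w"
  have nz: "z \<noteq> 0" using p w unfolding z_def by simp
  have "p * z = p powi i * w" unfolding z_def using p by (simp add: power_int_diff field_simps)
  hence "G (p powi i * w) = G z" using qG[OF nz] by simp
  thus ?case using step2 unfolding z_def[symmetric] by simp
qed

lemma quasi_liouville:
  fixes p y :: complex and F D :: "complex \<Rightarrow> complex"
  assumes p: "norm p < 1" "p \<noteq> 0"
    and hF: "F holomorphic_on - {0}" and hD: "D holomorphic_on - {0}"
    and qF: "\<And>x. x \<noteq> 0 \<Longrightarrow> F (p * x) = F x / x ^ 2"
    and qD: "\<And>x. x \<noteq> 0 \<Longrightarrow> D (p * x) = D x / x ^ 2"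
    and zF: "\<And>x. x \<noteq> 0 \<Longrightarrow> D x = 0 \<Longrightarrow> F x = 0"
    and sD: "\<And>x. x \<noteq> 0 \<Longrightarrow> D x = 0 \<Longrightarrow> \<exists>d. d \<noteq> 0 \<and> (D has_field_derivative d) (at x)"
    and y: "y \<noteq> 0" "D y \<noteq> 0" "F y = 0"
    and x: "x \<noteq> 0"
  shows "F x = 0"
proof -
  define h where "h = (\<lambda>x. F x / D x)"
  define G where "G = remove_sings h"
  have aF: "F analytic_on - {0}" using hF by (subst analytic_on_open) auto
  have aD: "D analytic_on - {0}" using hD by (subst analytic_on_open) auto
  have evD: "eventually (\<lambda>w. D w \<noteq> 0) (at z)" if z: "z \<noteq> 0" for z
  proof (cases "D z = 0")
    case False
    have "isCont D z" using aD z by (intro analytic_at_imp_isCont) (auto intro: analytic_on_subset)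
    hence "(D \<longlongrightarrow> D z) (at z)" by (simp add: isCont_def)
    thus ?thesis using False by (intro tendsto_imp_eventually_ne)
  next
    case True
    obtain d where d: "d \<noteq> 0" "(D has_field_derivative d) (at z)" using sD[OF z True] by blast
    hence "((\<lambda>w. (D w - D z) / (w - z)) \<longlongrightarrow> d) (at z)" by (simp add: has_field_derivative_iff)
    hence "eventually (\<lambda>w. (D w - D z) / (w - z) \<noteq> 0) (at z)" using d(1) by (intro tendsto_imp_eventually_ne)
    thus ?thesis by eventually_elim (use True in auto)
  qed
  have evnz: "eventually (\<lambda>w. w \<noteq> 0) (at z)" if z: "z \<noteq> 0" for z :: complex
  proof -
    have "((\<lambda>w. w) \<longlongrightarrow> z) (at z)" by simp
    thus ?thesis using z by (intro tendsto_imp_eventually_ne)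
  qed
  have ah: "h analytic_on {z}" if "z \<noteq> 0" "D z \<noteq> 0" for z
    unfolding h_def using that aF aD by (intro analytic_on_divide) (auto intro: analytic_on_subset)
  have Gh: "G z = h z" if "z \<noteq> 0" "D z \<noteq> 0" for z
    unfolding G_def using ah[OF that] by simp
  have aG: "G analytic_on {z}" if z: "z \<noteq> 0" for z
  proof (cases "D z = 0")
    case False
    show ?thesis unfolding G_def by (rule remove_sings_analytic_on[OF ah[OF z False]])
  next
    case True
    have "eventually (\<lambda>w. D w \<noteq> 0 \<and> w \<noteq> 0) (at z)"
      using evD[OF z] evnz[OF z] by eventually_elim auto
    then obtain r where r: "r > 0" "\<And>w. w \<noteq> z \<Longrightarrow> dist w z < r \<Longrightarrow> D w \<noteq> 0 \<and> w \<noteq> 0"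
      unfolding eventually_at by auto
    have iso: "isolated_singularity_at h z"
      unfolding isolated_singularity_at_def
    proof (intro exI conjI)
      show "h analytic_on ball z r - {z}"
        unfolding h_def
      proof (intro analytic_on_divide)
        have sub: "ball z r - {z} \<subseteq> - {0}"
        proof
          fix w assume "w \<in> ball z r - {z}"
          thus "w \<in> - {0}" using r(2)[of w] by (auto simp: dist_commute)
        qed
        show "F analytic_on ball z r - {z}" using aF sub by (rule analytic_on_subset)
        show "D analytic_on ball z r - {z}" using aD sub by (rule analytic_on_subset)
        show "\<And>w. w \<in> ball z r - {z} \<Longrightarrow> D w \<noteq> 0" using r(2) by (auto simp: dist_commute)
      qed
    qed (fact r(1))
    obtain d where d: "d \<noteq> 0" "(D has_field_derivative d) (at z)" using sD[OF z True] by blast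
    have "(F has_field_derivative deriv F z) (at z)"
      using hF z by (intro holomorphic_derivI[where S = "- {0}"]) auto
    hence l1: "((\<lambda>w. (F w - F z) / (w - z)) \<longlongrightarrow> deriv F z) (at z)" by (simp add: has_field_derivative_iff)
    have l2: "((\<lambda>w. (D w - D z) / (w - z)) \<longlongrightarrow> d) (at z)" using d(2) by (simp add: has_field_derivative_iff)
    have l3: "((\<lambda>w. ((F w - F z) / (w - z)) / ((D w - D z) / (w - z))) \<longlongrightarrow> deriv F z / d) (at z)"
      by (rule tendsto_divide[OF l1 l2 d(1)])
    have ev: "eventually (\<lambda>w. ((F w - F z) / (w - z)) / ((D w - D z) / (w - z)) = h w) (at z)"
    proof -
      have "eventually (\<lambda>w. w \<noteq> z) (at z)" by (simp add: eventually_at_filter)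
      thus ?thesis
      proof eventually_elim
        case (elim w)
        hence "w - z \<noteq> 0" by simp
        thus ?case unfolding h_def using True zF[OF z True] by (simp add: div_div_cancel)
      qed
    qed
    have "(h \<longlongrightarrow> deriv F z / d) (at z)" using tendsto_cong[OF ev] l3 by simp
    thus ?thesis unfolding G_def using iso by (intro remove_sings_analytic_at) auto
  qed
  have aG': "G analytic_on - {0}"
  proof (subst analytic_on_analytic_at, intro ballI)
    fix z :: complex assume "z \<in> - {0}"
    thus "G analytic_on {z}" using aG by simp
  qed
  have hG: "G holomorphic_on - {0}" using analytic_imp_holomorphic[OF aG'] .
  have cG: "continuous_on (- {0}) G" using hG by (rule holomorphic_on_imp_continuous_on)
  have perG: "G (p * z) = G z" if z: "z \<noteq> 0" for z
  proof -
    have ev: "eventually (\<lambda>w. G (p * w) = G w) (at z)"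
      using evD[OF z] evnz[OF z]
    proof eventually_elim
      case (elim w)
      have Dp: "D (p * w) \<noteq> 0" using elim qD[of w] by simp
      have pw: "p * w \<noteq> 0" using elim p by simp
      have "G (p * w) = h (p * w)" by (rule Gh[OF pw Dp])
      also have "\<dots> = h w"
      proof -
        have "w ^ 2 \<noteq> 0" using elim by simp
        thus ?thesis unfolding h_def using qF[of w] qD[of w] elim by (simp add: div_div_cancel)
      qed
      also have "\<dots> = G w" using Gh[of w] elim by simp
      finally show ?case .
    qed
    have c1: "isCont G z" using aG[OF z] by (rule analytic_at_imp_isCont)
    have c2: "isCont G (p * z)" using aG[of "p * z"] z p by (intro analytic_at_imp_isCont) auto
    have t1: "((\<lambda>w. G (p * w)) \<longlongrightarrow> G (p * z)) (at z)"
    proof -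
      have "((\<lambda>w. p * w) \<longlongrightarrow> p * z) (at z)" by (intro tendsto_intros)
      from isCont_tendsto_compose[OF c2 this] show ?thesis .
    qed
    have t2: "((\<lambda>w. G (p * w)) \<longlongrightarrow> G z) (at z)"
      using tendsto_cong[OF ev] c1 by (simp add: isCont_def)
    show ?thesis using tendsto_unique[OF _ t1 t2] by simp
  qed
  define K where "K = cball (0::complex) 1 - ball 0 (norm p)"
  have Ksub: "K \<subseteq> - {0}" unfolding K_def using p by auto
  have "compact K" unfolding K_def by (intro compact_diff) auto
  hence "compact (G ` K)" using continuous_on_subset[OF cG Ksub] by (intro compact_continuous_image)
  then obtain B where B: "\<And>w. w \<in> K \<Longrightarrow> norm (G w) \<le> B"
    by (meson bounded_iff compact_imp_bounded imageI)
  have bnd: "norm (G w) \<le> B" if w: "w \<noteq> 0" for w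
  proof -
    have np: "0 < norm p" "norm p < 1" using p by auto
    obtain k :: int where k: "norm p \<le> norm p powi k * norm w" "norm p powi k * norm w \<le> 1"
      using exists_int_annulus[OF np, of "norm w"] w by auto
    have "norm (p powi k * w) = norm p powi k * norm w" by (simp add: norm_mult norm_power_int)
    hence "p powi k * w \<in> K" unfolding K_def using k by auto
    hence "norm (G (p powi k * w)) \<le> B" by (rule B)
    moreover have "G (p powi k * w) = G w" using powi_transfer_eq[of p G w k] perG p w by auto
    ultimately show ?thesis by simp
  qed
  have hH: "(\<lambda>z. G (exp z)) holomorphic_on UNIV"
  proof -
    have "(G \<circ> exp) holomorphic_on UNIV"
      by (rule holomorphic_on_compose_gen[OF _ hG]) (auto intro: holomorphic_intros)
    thus ?thesis by (simp add: o_def)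
  qed
  have "bounded (range (\<lambda>z. G (exp z)))"
    unfolding bounded_iff using bnd by (intro exI[of _ B]) auto
  from Liouville_theorem[OF hH this] obtain c where c: "\<And>z. G (exp z) = c"
    unfolding constant_on_def by auto
  have Gc: "G w = c" if "w \<noteq> 0" for w using c[of "Ln w"] that by simp
  have "c = 0" using Gc[OF y(1)] Gh[OF y(1) y(2)] y(3) unfolding h_def by simp
  show ?thesis
  proof (cases "D x = 0")
    case True thus ?thesis using zF[OF x] by simp
  next
    case False
    have "h x = 0" using Gc[OF x] Gh[OF x False] \<open>c = 0\<close> by simp
    thus ?thesis unfolding h_def using False by simp
  qed
qed




lemma theta_p2:
  fixes p x c :: complex
  assumes p: "norm p < 1" "p \<noteq> 0" and x: "x \<noteq> 0" and c: "c \<noteq> 0"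
  shows "theta (p * x * c) p * theta (p * x / c) p = theta (x * c) p * theta (x / c) p / x ^ 2"
proof -
  have 1: "theta (p * x * c) p = - theta (x * c) p / (x * c)"
    using theta_mult_p[OF p(1) _ p(2), of "x * c"] x c by (simp add: mult.assoc)
  have 2: "theta (p * x / c) p = - theta (x / c) p / (x / c)"
    using theta_mult_p[OF p(1) _ p(2), of "x / c"] x c by simp
  show ?thesis unfolding 1 2 using x c by (simp add: field_simps power2_eq_square)
qed

lemma addition_generic:
  fixes p x y u v :: complex
  assumes p: "norm p < 1" "p \<noteq> 0"
    and nz: "x \<noteq> 0" "y \<noteq> 0" "u \<noteq> 0" "v \<noteq> 0"
    and g1: "theta (u * u) p \<noteq> 0" and g2: "theta (y * u) p \<noteq> 0" and g3: "theta (y / u) p \<noteq> 0"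
  shows "theta (x * y) p * theta (x / y) p * theta (u * v) p * theta (u / v) p
       - theta (x * v) p * theta (x / v) p * theta (u * y) p * theta (u / y) p
       = (u / y) * theta (y * v) p * theta (y / v) p * theta (x * u) p * theta (x / u) p"
proof -
  define T where "T = (\<lambda>z. theta z p)"
  define A where "A = T (u * v) * T (u / v)"
  define B where "B = T (u * y) * T (u / y)"
  define C where "C = (u / y) * T (y * v) * T (y / v)"
  define F where "F = (\<lambda>x. T (x * y) * T (x / y) * A - T (x * v) * T (x / v) * B - C * (T (x * u) * T (x / u)))"
  define D where "D = (\<lambda>x. T (x * u) * T (x / u))"
  have T1: "T 1 = 0" unfolding T_def by (rule theta_1[OF p(1)])
  have Tinv: "T (1 / z) = - T z / z" if "z \<noteq> 0" for z unfolding T_def by (rule theta_inv[OF p(1) that])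
  have T2: "T (p * z * c) * T (p * z / c) = T (z * c) * T (z / c) / z ^ 2" if "z \<noteq> 0" "c \<noteq> 0" for z c
    unfolding T_def by (rule theta_p2[OF p that])
  have hF: "F holomorphic_on - {0}" unfolding F_def T_def using p nz by (intro holomorphic_intros) auto
  have hD: "D holomorphic_on - {0}" unfolding D_def T_def using p nz by (intro holomorphic_intros) auto
  have qF: "F (p * z) = F z / z ^ 2" if z: "z \<noteq> 0" for z
    unfolding F_def using T2[OF z nz(2)] T2[OF z nz(4)] T2[OF z nz(3)] z by (simp add: field_simps)
  have qD: "D (p * z) = D z / z ^ 2" if z: "z \<noteq> 0" for z
    unfolding D_def using T2[OF z nz(3)] by simp
  have Fu: "F u = 0" unfolding F_def A_def B_def using T1 nz by (simp add: algebra_simps)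
  have Fiu: "F (1 / u) = 0"
  proof -
    have i1: "T ((1 / u) * y) = - T (u / y) / (u / y)" using Tinv[of "u / y"] nz by simp
    have i2: "T ((1 / u) / y) = - T (u * y) / (u * y)" using Tinv[of "u * y"] nz by simp
    have i3: "T ((1 / u) * v) = - T (u / v) / (u / v)" using Tinv[of "u / v"] nz by simp
    have i4: "T ((1 / u) / v) = - T (u * v) / (u * v)" using Tinv[of "u * v"] nz by simp
    have i5: "(1 / u) * u = 1" using nz by simp
    show ?thesis unfolding F_def i1 i2 i3 i4 i5 T1 A_def B_def using nz by (simp add: field_simps)
  qed
  have Fy: "F y = 0"
  proof -
    have j1: "T (y / u) = - T (u / y) / (u / y)" using Tinv[of "u / y"] nz by simp
    have j2: "T (y * u) = T (u * y)" by (simp add: mult.commute)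
    have j3: "y / y = 1" using nz by simp
    show ?thesis unfolding F_def j1 j2 j3 T1 B_def C_def using nz by (simp add: field_simps)
  qed
  have zpow: "T (p powi k) = 0" for k :: int
    unfolding T_def using theta_zero_iff[OF p, of "p powi k"] p by auto
  have zF: "F z = 0" if z: "z \<noteq> 0" "D z = 0" for z
  proof -
    from z(2) have "T (z * u) = 0 \<or> T (z / u) = 0" unfolding D_def by simp
    thus ?thesis
    proof
      assume "T (z * u) = 0"
      then obtain k :: int where k: "z * u = p powi k"
        using theta_zero_iff[OF p, of "z * u"] z nz unfolding T_def by auto
      have "z = p powi k * (1 / u)" using k nz by (simp add: field_simps)
      thus ?thesis using powi_transfer_zero[of p F "1 / u" k] qF p(2) nz Fiu by simp
    next
      assume "T (z / u) = 0"
      then obtain k :: int where k: "z / u = p powi k"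
        using theta_zero_iff[OF p, of "z / u"] z nz unfolding T_def by auto
      have "z = p powi k * u" using k nz by (simp add: field_simps)
      thus ?thesis using powi_transfer_zero[of p F u k] qF p(2) nz Fu by simp
    qed
  qed
  have both: False if z: "z \<noteq> 0" "T (z * u) = 0" "T (z / u) = 0" for z
  proof -
    obtain k :: int where k: "z * u = p powi k"
      using theta_zero_iff[OF p, of "z * u"] z nz unfolding T_def by auto
    obtain m :: int where m: "z / u = p powi m"
      using theta_zero_iff[OF p, of "z / u"] z nz unfolding T_def by auto
    have "u * u = (z * u) / (z / u)" using z nz by (simp add: field_simps)
    also have "\<dots> = p powi (k - m)" using k m p by (simp add: power_int_diff)
    finally have "T (u * u) = 0" using zpow by simp
    thus False using g1 unfolding T_def by simp
  qed
  have sD: "\<exists>d. d \<noteq> 0 \<and> (D has_field_derivative d) (at z)" if z: "z \<noteq> 0" "D z = 0" for z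
  proof -
    have h1: "(\<lambda>w. T (w * u)) holomorphic_on - {0}" unfolding T_def using p nz by (intro holomorphic_intros) auto
    have h2: "(\<lambda>w. T (w / u)) holomorphic_on - {0}" unfolding T_def using p nz by (intro holomorphic_intros) auto
    have d1: "((\<lambda>w. T (w * u)) has_field_derivative deriv (\<lambda>w. T (w * u)) z) (at z)"
      using h1 z by (intro holomorphic_derivI[where S = "- {0}"]) auto
    have d2: "((\<lambda>w. T (w / u)) has_field_derivative deriv (\<lambda>w. T (w / u)) z) (at z)"
      using h2 z by (intro holomorphic_derivI[where S = "- {0}"]) auto
    from z(2) have "T (z * u) = 0 \<or> T (z / u) = 0" unfolding D_def by simp
    thus ?thesis
    proof
      assume a: "T (z * u) = 0"
      hence b: "T (z / u) \<noteq> 0" using both[OF z(1)] by blast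
      obtain d where d: "d \<noteq> 0" "(T has_field_derivative d) (at (z * u))"
        using theta_deriv_nz[OF p, of "z * u"] a z nz unfolding T_def by auto
      have "((\<lambda>w. w * u) has_field_derivative u) (at z)" by (auto intro!: derivative_eq_intros)
      from DERIV_chain2[OF d(2) this]
      have c1: "((\<lambda>w. T (w * u)) has_field_derivative d * u) (at z)" .
      have "(D has_field_derivative (d * u) * T (z / u) + deriv (\<lambda>w. T (w / u)) z * T (z * u)) (at z)"
        unfolding D_def by (rule DERIV_mult[OF c1 d2])
      moreover have "(d * u) * T (z / u) + deriv (\<lambda>w. T (w / u)) z * T (z * u) \<noteq> 0"
        using a b d(1) nz by simp
      ultimately show ?thesis by blast
    next
      assume a: "T (z / u) = 0"
      hence b: "T (z * u) \<noteq> 0" using both[OF z(1)] by blast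
      obtain d where d: "d \<noteq> 0" "(T has_field_derivative d) (at (z / u))"
        using theta_deriv_nz[OF p, of "z / u"] a z nz unfolding T_def by auto
      have "((\<lambda>w. w / u) has_field_derivative 1 / u) (at z)" using nz by (auto intro!: derivative_eq_intros)
      from DERIV_chain2[OF d(2) this]
      have c2: "((\<lambda>w. T (w / u)) has_field_derivative d * (1 / u)) (at z)" .
      have "(D has_field_derivative deriv (\<lambda>w. T (w * u)) z * T (z / u) + (d * (1 / u)) * T (z * u)) (at z)"
        unfolding D_def by (rule DERIV_mult[OF d1 c2])
      moreover have "deriv (\<lambda>w. T (w * u)) z * T (z / u) + (d * (1 / u)) * T (z * u) \<noteq> 0"
        using a b d(1) nz by simp
      ultimately show ?thesis by blast
    qed
  qed
  have Dy: "D y \<noteq> 0" unfolding D_def T_def using g2 g3 by simp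
  have "F x = 0"
    by (rule quasi_liouville[OF p hF hD qF qD zF sD nz(2) Dy Fy nz(1)])
  thus ?thesis unfolding F_def A_def B_def C_def T_def by (simp add: algebra_simps)
qed




lemma addition_p0:
  fixes x y u v :: complex
  assumes nz: "x \<noteq> 0" "y \<noteq> 0" "u \<noteq> 0" "v \<noteq> 0"
  shows "(1 - x * y) * (1 - x / y) * (1 - u * v) * (1 - u / v)
       - (1 - x * v) * (1 - x / v) * (1 - u * y) * (1 - u / y)
       = (u / y) * (1 - y * v) * (1 - y / v) * (1 - x * u) * (1 - x / u)"
  using nz by (simp add: divide_simps) algebra

lemma addition_formula:
  fixes p x y u v :: complex
  assumes p: "norm p < 1"
    and nz: "x \<noteq> 0" "y \<noteq> 0" "u \<noteq> 0" "v \<noteq> 0"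
  shows "theta (x * y) p * theta (x / y) p * theta (u * v) p * theta (u / v) p
       - theta (x * v) p * theta (x / v) p * theta (u * y) p * theta (u / y) p
       = (u / y) * theta (y * v) p * theta (y / v) p * theta (x * u) p * theta (x / u) p"
proof (cases "p = 0")
  case True
  show ?thesis unfolding True theta_p0 by (rule addition_p0[OF nz])
next
  case False
  define L where "L = (\<lambda>z. theta (x * y) p * theta (x / y) p * theta (z * v) p * theta (z / v) p
       - theta (x * v) p * theta (x / v) p * theta (z * y) p * theta (z / y) p)"
  define R where "R = (\<lambda>z. (z / y) * theta (y * v) p * theta (y / v) p * theta (x * z) p * theta (x / z) p)"
  define Bad where "Bad = {z. z = 0 \<or> theta (z * z) p = 0 \<or> theta (y * z) p = 0 \<or> theta (y / z) p = 0}"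
  have pp: "norm p < 1" "p \<noteq> 0" using p False by auto
  have "Bad \<subseteq> {0} \<union> range (\<lambda>k::int. csqrt (p powi k)) \<union> range (\<lambda>k::int. - csqrt (p powi k))
      \<union> range (\<lambda>k::int. p powi k / y) \<union> range (\<lambda>k::int. y / p powi k)"
  proof
    fix z assume z: "z \<in> Bad"
    show "z \<in> {0} \<union> range (\<lambda>k::int. csqrt (p powi k)) \<union> range (\<lambda>k::int. - csqrt (p powi k))
      \<union> range (\<lambda>k::int. p powi k / y) \<union> range (\<lambda>k::int. y / p powi k)"
    proof (cases "z = 0")
      case True thus ?thesis by simp
    next
      case z0: False
      from z z0 have "theta (z * z) p = 0 \<or> theta (y * z) p = 0 \<or> theta (y / z) p = 0"
        unfolding Bad_def by auto
      thus ?thesis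
      proof (elim disjE)
        assume "theta (z * z) p = 0"
        then obtain k :: int where k: "z * z = p powi k" using theta_zero_iff[OF pp, of "z * z"] z0 by auto
        have c2: "(csqrt (p powi k)) ^ 2 = p powi k" by (rule power2_csqrt)
        have z2: "z ^ 2 = p powi k" using k by (simp add: power2_eq_square)
        have "z ^ 2 = (csqrt (p powi k)) ^ 2" using z2 by (simp only: c2)
        hence "z = csqrt (p powi k) \<or> z = - csqrt (p powi k)" by (rule power2_eq_iff[THEN iffD1])
        thus ?thesis by blast
      next
        assume "theta (y * z) p = 0"
        then obtain k :: int where k: "y * z = p powi k" using theta_zero_iff[OF pp, of "y * z"] z0 nz by auto
        hence "z = p powi k / y" using nz by (simp add: field_simps)
        thus ?thesis by blast
      next
        assume "theta (y / z) p = 0"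
        then obtain k :: int where k: "y / z = p powi k" using theta_zero_iff[OF pp, of "y / z"] z0 nz by auto
        hence "z = y / p powi k" using nz z0 pp by (simp add: field_simps)
        thus ?thesis by blast
      qed
    qed
  qed
  moreover have "countable ({0} \<union> range (\<lambda>k::int. csqrt (p powi k)) \<union> range (\<lambda>k::int. - csqrt (p powi k))
      \<union> range (\<lambda>k::int. p powi k / y) \<union> range (\<lambda>k::int. y / p powi k))"
    by auto
  ultimately have cB: "countable Bad" by (rule countable_subset)
  have "\<exists>z. z \<in> ball u (1 / Suc n) \<and> z \<notin> Bad" for n :: nat
  proof (rule ccontr)
    assume "\<not> ?thesis"
    hence "ball u (1 / Suc n) \<subseteq> Bad" by auto
    hence "countable (ball u (1 / Suc n))" using cB by (rule countable_subset)
    moreover have "uncountable (ball u (1 / Suc n))" by (intro uncountable_ball) auto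
    ultimately show False by simp
  qed
  then obtain s where s: "\<And>n. s n \<in> ball u (1 / Suc n)" "\<And>n. s n \<notin> Bad" by metis
  have lim: "s \<longlonglongrightarrow> u"
    unfolding lim_sequentially
  proof (intro allI impI)
    fix r :: real assume r: "r > 0"
    obtain N0 :: nat where N0: "N0 > 0" "inverse (real N0) < r" using ex_inverse_of_nat_less[OF r] by blast
    define N where "N = N0"
    have N: "inverse (real (Suc N)) < r"
    proof -
      have "inverse (real (Suc N)) \<le> inverse (real N0)" unfolding N_def using N0(1)
        by (intro le_imp_inverse_le) auto
      thus ?thesis using N0(2) by simp
    qed
    show "\<exists>no. \<forall>n\<ge>no. dist (s n) u < r"
    proof (intro exI allI impI)
      fix n assume n: "N \<le> n"
      have "dist (s n) u < 1 / Suc n" using s(1)[of n] by (simp add: dist_commute)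
      also have "1 / real (Suc n) \<le> 1 / Suc N" using n by (intro divide_left_mono) auto
      also have "\<dots> < r" using N by (simp add: field_simps)
      finally show "dist (s n) u < r" .
    qed
  qed
  have eq: "L (s n) = R (s n)" for n
  proof -
    have sn: "s n \<noteq> 0" "theta (s n * s n) p \<noteq> 0" "theta (y * s n) p \<noteq> 0" "theta (y / s n) p \<noteq> 0"
      using s(2)[of n] unfolding Bad_def by auto
    show ?thesis unfolding L_def R_def
      by (rule addition_generic[OF pp nz(1,2) sn(1) nz(4) sn(2,3,4)])
  qed
  have hL: "L holomorphic_on - {0}" unfolding L_def using pp nz by (intro holomorphic_intros) auto
  have hR: "R holomorphic_on - {0}" unfolding R_def using pp nz by (intro holomorphic_intros) auto
  have cL: "isCont L u"
    using holomorphic_on_imp_continuous_on[OF hL] nz(3)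
    by (simp add: continuous_on_eq_continuous_at open_Compl)
  have cR: "isCont R u"
    using holomorphic_on_imp_continuous_on[OF hR] nz(3)
    by (simp add: continuous_on_eq_continuous_at open_Compl)
  have t1: "(\<lambda>n. L (s n)) \<longlonglongrightarrow> L u" by (rule isCont_tendsto_compose[OF cL lim])
  have t2: "(\<lambda>n. L (s n)) \<longlonglongrightarrow> R u" using isCont_tendsto_compose[OF cR lim] eq by simp
  have "L u = R u" using LIMSEQ_unique[OF t1 t2] .
  thus ?thesis unfolding L_def R_def .
qed




lemma alg_step:
  fixes A E F N v w tAE tAF tNA tB tC tD tE tF tN tAB tAC tAD tX1 tX2 tNvAw tAvN tA tAEF tFNA tENA
    tEFNA tACD tABD tABC tEFA tX :: complex
  assumes nz: "A \<noteq> 0" "E \<noteq> 0" "F \<noteq> 0" "N \<noteq> 0" "v \<noteq> 0" "w \<noteq> 0"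
    and nzt: "tAB \<noteq> 0" "tAC \<noteq> 0" "tAD \<noteq> 0" "tX1 \<noteq> 0" "tX2 \<noteq> 0" "tAvN \<noteq> 0"
      "tEFNA \<noteq> 0" "tFNA \<noteq> 0" "tENA \<noteq> 0" "tEFA \<noteq> 0"
    and r1: "tNvAw = - tAvN * (v * N / (A * w))"
    and R: "tAEF = - tEFA * (A / (E * F))"
    and W1: "tA * tFNA * tAEF * tENA = tAE * tEFNA * tAF * tNA + (N / A) * tX * tE * tN * tF"
    and W2: "(N / A) * tX * tAB * tAC * tAD + (A / (E * F)) * tA * tACD * tABD * tABC
             = (N / A) * tB * tC * tD * tEFNA"
  shows "tAE * tAF * tNA - (tB * tC * tD * tE * tF * tN) / (tAB * tAC * tAD * tX1 * tX2 * tAvN)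
           * (w / v) * (tX1 * tX2 * tNvAw)
       = tA * tAEF * tFNA * tENA / tEFNA * (1 - tACD * tABD * tABC / (tAB * tAC * tAD)
           * (tE * tF * tN / (tFNA * tENA * tEFA)))"
proof -
  have K: "(tB * tC * tD * tE * tF * tN) / (tAB * tAC * tAD * tX1 * tX2 * tAvN) * (w / v) * (tX1 * tX2 * tNvAw)
      = - ((N / A) * (tB * tC * tD * tE * tF * tN) / (tAB * tAC * tAD))"
    unfolding r1 using nz nzt by (simp add: field_simps)
  have P: "tA * tAEF * tFNA * tENA / tEFNA = tAE * tAF * tNA + (N / A) * tX * tE * tN * tF / tEFNA"
  proof -
    have "tA * tAEF * tFNA * tENA = tA * tFNA * tAEF * tENA" by (simp add: ac_simps)
    also have "\<dots> = tAE * tEFNA * tAF * tNA + (N / A) * tX * tE * tN * tF" by (rule W1)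
    finally have e: "tA * tAEF * tFNA * tENA = tAE * tEFNA * tAF * tNA + (N / A) * tX * tE * tN * tF" .
    show ?thesis unfolding e using nzt by (simp add: field_simps)
  qed
  have PQ: "tA * tAEF * tFNA * tENA / tEFNA * (tACD * tABD * tABC / (tAB * tAC * tAD)
           * (tE * tF * tN / (tFNA * tENA * tEFA)))
      = - ((A / (E * F)) * tA * tACD * tABD * tABC * tE * tF * tN / (tEFNA * tAB * tAC * tAD))"
    unfolding R using nz nzt by (simp add: field_simps)
  have S3: "(N / A) * tX / tEFNA + (A / (E * F)) * tA * tACD * tABD * tABC / (tEFNA * tAB * tAC * tAD)
      = (N / A) * tB * tC * tD / (tAB * tAC * tAD)"
  proof -
    have "(N / A) * tX / tEFNA + (A / (E * F)) * tA * tACD * tABD * tABC / (tEFNA * tAB * tAC * tAD)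
        = ((N / A) * tX * tAB * tAC * tAD + (A / (E * F)) * tA * tACD * tABD * tABC) / (tEFNA * tAB * tAC * tAD)"
      using nzt by (simp add: field_simps)
    also have "\<dots> = (N / A) * tB * tC * tD * tEFNA / (tEFNA * tAB * tAC * tAD)" unfolding W2 ..
    also have "\<dots> = (N / A) * tB * tC * tD / (tAB * tAC * tAD)" using nzt by (simp add: field_simps)
    finally show ?thesis .
  qed
  have "tA * tAEF * tFNA * tENA / tEFNA * (1 - tACD * tABD * tABC / (tAB * tAC * tAD)
           * (tE * tF * tN / (tFNA * tENA * tEFA)))
      = tA * tAEF * tFNA * tENA / tEFNA - tA * tAEF * tFNA * tENA / tEFNA * (tACD * tABD * tABC / (tAB * tAC * tAD)
           * (tE * tF * tN / (tFNA * tENA * tEFA)))"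
    by (simp add: right_diff_distrib)
  also have "\<dots> = tAE * tAF * tNA + (N / A) * tX * tE * tN * tF / tEFNA
      + (A / (E * F)) * tA * tACD * tABD * tABC * tE * tF * tN / (tEFNA * tAB * tAC * tAD)"
    by (subst PQ, subst P, simp)
  also have "\<dots> = tAE * tAF * tNA + tE * tF * tN * ((N / A) * tX / tEFNA
      + (A / (E * F)) * tA * tACD * tABD * tABC / (tEFNA * tAB * tAC * tAD))"
    by (simp add: algebra_simps)
  also have "\<dots> = tAE * tAF * tNA + tE * tF * tN * ((N / A) * tB * tC * tD / (tAB * tAC * tAD))"
    unfolding S3 ..
  also have "\<dots> = tAE * tAF * tNA - (- ((N / A) * (tB * tC * tD * tE * tF * tN) / (tAB * tAC * tAD)))"
    by (simp add: algebra_simps)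
  also have "\<dots> = tAE * tAF * tNA - (tB * tC * tD * tE * tF * tN) / (tAB * tAC * tAD * tX1 * tX2 * tAvN)
           * (w / v) * (tX1 * tX2 * tNvAw)"
    unfolding K ..
  finally show ?thesis by simp
qed




lemma theta_inv':
  assumes "norm p < 1" "z \<noteq> 0" "y = 1 / z"
  shows "theta y p = - theta z p / z"
  using theta_inv[OF assms(1,2)] assms(3) by simp

lemma step_identity:
  fixes p A B C D E F N t u v w :: complex
  assumes p: "norm p < 1"
    and nz: "A \<noteq> 0" "B \<noteq> 0" "C \<noteq> 0" "D \<noteq> 0" "E \<noteq> 0" "F \<noteq> 0" "N \<noteq> 0"
      "t \<noteq> 0" "u \<noteq> 0" "v \<noteq> 0" "w \<noteq> 0"
    and bal: "A ^ 3 = B * C * D * E * F * N"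
    and n1: "theta (A / B) p \<noteq> 0" "theta (A / C) p \<noteq> 0" "theta (A / D) p \<noteq> 0"
    and n2: "theta (A * w / (E * t)) p \<noteq> 0" "theta (A * w / (F * u)) p \<noteq> 0" "theta (A * w / (v * N)) p \<noteq> 0"
    and n3: "theta (E * F * N / A) p \<noteq> 0" "theta (F * N / A) p \<noteq> 0" "theta (E * N / A) p \<noteq> 0"
      "theta (E * F / A) p \<noteq> 0"
  shows "theta (A / E) p * theta (A / F) p * theta (N / A) p
      - (theta B p * theta C p * theta D p * theta E p * theta F p * theta N p)
        / (theta (A / B) p * theta (A / C) p * theta (A / D) p * theta (A * w / (E * t)) p
           * theta (A * w / (F * u)) p * theta (A * w / (v * N)) p)
        * (w / v) * (theta (A * w / (E * t)) p * theta (A * w / (F * u)) p * theta (N * v / (A * w)) p)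
    = theta A p * theta (A / (E * F)) p * theta (F * N / A) p * theta (E * N / A) p / theta (E * F * N / A) p
      * (1 - theta (A / (C * D)) p * theta (A / (B * D)) p * theta (A / (B * C)) p
             / (theta (A / B) p * theta (A / C) p * theta (A / D) p)
           * (theta E p * theta F p * theta N p
              / (theta (F * N / A) p * theta (E * N / A) p * theta (E * F / A) p)))"
proof -
  define X where "X = theta (A ^ 2 / (E * F * N)) p"
  have r1: "theta (N * v / (A * w)) p = - theta (A * w / (v * N)) p * (v * N / (A * w))"
    using theta_inv'[OF p, of "A * w / (v * N)" "N * v / (A * w)"] nz by (simp add: field_simps)
  have R: "theta (A / (E * F)) p = - theta (E * F / A) p * (A / (E * F))"
    using theta_inv'[OF p, of "E * F / A" "A / (E * F)"] nz by (simp add: field_simps)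
  have W1: "theta A p * theta (F * N / A) p * theta (A / (E * F)) p * theta (E * N / A) p
      = theta (A / E) p * theta (E * F * N / A) p * theta (A / F) p * theta (N / A) p
        + (N / A) * X * theta E p * theta N p * theta F p"
  proof -
    define x where "x = csqrt (F * N)"
    have xx: "x * x = F * N" unfolding x_def using power2_csqrt[of "F * N"] by (simp add: power2_eq_square)
    have x0: "x \<noteq> 0" using xx nz by auto
    have Neq: "N = x * x / F" using xx nz by (simp add: field_simps)
    define y where "y = A / (E * x)"
    define vv where "vv = A / x"
    define uu where "uu = x / F"
    have y0: "y \<noteq> 0" and vv0: "vv \<noteq> 0" and uu0: "uu \<noteq> 0" unfolding y_def vv_def uu_def using nz x0 by auto
    have AF: "theta (x * y) p * theta (x / y) p * theta (uu * vv) p * theta (uu / vv) p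
       - theta (x * vv) p * theta (x / vv) p * theta (uu * y) p * theta (uu / y) p
       = (uu / y) * theta (y * vv) p * theta (y / vv) p * theta (x * uu) p * theta (x / uu) p"
      by (rule addition_formula[OF p x0 y0 uu0 vv0])
    have a1: "x * y = A / E" unfolding y_def using x0 nz by (simp add: field_simps)
    have a2: "x / y = E * F * N / A" unfolding y_def Neq using x0 nz by (simp add: field_simps)
    have a3: "uu * vv = A / F" unfolding uu_def vv_def using x0 nz by (simp add: field_simps)
    have a4: "uu / vv = N / A" unfolding uu_def vv_def Neq using x0 nz by (simp add: field_simps)
    have a5: "x * vv = A" unfolding vv_def using x0 by simp
    have a6: "x / vv = F * N / A" unfolding vv_def Neq using x0 nz by (simp add: field_simps)
    have a7: "uu * y = A / (E * F)" unfolding uu_def y_def using x0 nz by (simp add: field_simps)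
    have a8: "uu / y = E * N / A" unfolding uu_def y_def Neq using x0 nz by (simp add: field_simps)
    have a9: "y * vv = A ^ 2 / (E * F * N)" unfolding y_def vv_def Neq using x0 nz
      by (simp add: field_simps power2_eq_square)
    have a10: "y / vv = 1 / E" unfolding y_def vv_def using x0 nz by (simp add: field_simps)
    have a11: "x * uu = N" unfolding uu_def Neq using x0 nz by (simp add: field_simps)
    have a12: "x / uu = F" unfolding uu_def using x0 nz by (simp add: field_simps)
    have iE: "theta (1 / E) p = - theta E p / E" by (rule theta_inv[OF p nz(5)])
    have "theta (A / E) p * theta (E * F * N / A) p * theta (A / F) p * theta (N / A) p
        - theta A p * theta (F * N / A) p * theta (A / (E * F)) p * theta (E * N / A) p
        = (E * N / A) * X * (- theta E p / E) * theta N p * theta F p"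
      using AF unfolding a1 a2 a3 a4 a5 a6 a7 a8 a9 a10 a11 a12 iE X_def .
    hence "theta A p * theta (F * N / A) p * theta (A / (E * F)) p * theta (E * N / A) p
        = theta (A / E) p * theta (E * F * N / A) p * theta (A / F) p * theta (N / A) p
          - (E * N / A) * X * (- theta E p / E) * theta N p * theta F p"
      by (simp add: algebra_simps)
    also have "(E * N / A) * X * (- theta E p / E) * theta N p * theta F p
        = - ((N / A) * X * theta E p * theta N p * theta F p)"
      using nz by (simp add: field_simps)
    finally show ?thesis by simp
  qed
  have W2: "(N / A) * X * theta (A / B) p * theta (A / C) p * theta (A / D) p
      + (A / (E * F)) * theta A p * theta (A / (C * D)) p * theta (A / (B * D)) p * theta (A / (B * C)) p
      = (N / A) * theta B p * theta C p * theta D p * theta (E * F * N / A) p"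
  proof -
    define x where "x = csqrt (B * C)"
    have xx: "x * x = B * C" unfolding x_def using power2_csqrt[of "B * C"] by (simp add: power2_eq_square)
    have x0: "x \<noteq> 0" using xx nz by auto
    have Ceq: "C = x * x / B" using xx nz by (simp add: field_simps)
    define y where "y = B / x"
    define uu where "uu = A / x"
    define vv where "vv = D * x / A"
    have y0: "y \<noteq> 0" and vv0: "vv \<noteq> 0" and uu0: "uu \<noteq> 0" unfolding y_def vv_def uu_def using nz x0 by auto
    have AF: "theta (x * y) p * theta (x / y) p * theta (uu * vv) p * theta (uu / vv) p
       - theta (x * vv) p * theta (x / vv) p * theta (uu * y) p * theta (uu / y) p
       = (uu / y) * theta (y * vv) p * theta (y / vv) p * theta (x * uu) p * theta (x / uu) p"
      by (rule addition_formula[OF p x0 y0 uu0 vv0])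
    have BCD: "B * C * D = A ^ 3 / (E * F * N)" using bal nz by (simp add: field_simps)
    have b1: "x * y = B" unfolding y_def using x0 by simp
    have b2: "x / y = C" unfolding y_def Ceq using x0 nz by (simp add: field_simps)
    have b3: "uu * vv = D" unfolding uu_def vv_def using x0 nz by (simp add: field_simps)
    have b4: "uu / vv = E * F * N / A"
    proof -
      have "uu / vv = A ^ 2 / (B * C * D)" unfolding uu_def vv_def Ceq using x0 nz
        by (simp add: field_simps power2_eq_square)
      also have "\<dots> = E * F * N / A" unfolding BCD using nz
        by (simp add: field_simps power2_eq_square power3_eq_cube)
      finally show ?thesis .
    qed
    have b5: "x * vv = A ^ 2 / (E * F * N)"
    proof -
      have "x * vv = B * C * D / A" unfolding vv_def Ceq using x0 nz by (simp add: field_simps)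
      also have "\<dots> = A ^ 2 / (E * F * N)" unfolding BCD using nz
        by (simp add: field_simps power2_eq_square power3_eq_cube)
      finally show ?thesis .
    qed
    have b6: "x / vv = A / D" unfolding vv_def using x0 nz by (simp add: field_simps)
    have b7: "uu * y = A / C" unfolding uu_def y_def Ceq using x0 nz by (simp add: field_simps)
    have b8: "uu / y = A / B" unfolding uu_def y_def using x0 nz by (simp add: field_simps)
    have b9: "y * vv = 1 / (A / (B * D))" unfolding y_def vv_def using x0 nz by (simp add: field_simps)
    have b10: "y / vv = A / (C * D)" unfolding y_def vv_def Ceq using x0 nz by (simp add: field_simps)
    have b11: "x * uu = A" unfolding uu_def using x0 by simp
    have b12: "x / uu = 1 / (A / (B * C))" unfolding uu_def Ceq using x0 nz by (simp add: field_simps)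
    have i1: "theta (1 / (A / (B * D))) p = - theta (A / (B * D)) p / (A / (B * D))"
      by (rule theta_inv) (use p nz in auto)
    have i2: "theta (1 / (A / (B * C))) p = - theta (A / (B * C)) p / (A / (B * C))"
      by (rule theta_inv) (use p nz in auto)
    have e: "theta B p * theta C p * theta D p * theta (E * F * N / A) p
        - X * theta (A / D) p * theta (A / C) p * theta (A / B) p
        = (A / B) * (- theta (A / (B * D)) p / (A / (B * D))) * theta (A / (C * D)) p * theta A p
          * (- theta (A / (B * C)) p / (A / (B * C)))"
      using AF unfolding b1 b2 b3 b4 b5 b6 b7 b8 b9 b10 b11 b12 i1 i2 X_def .
    have c: "(N / A) * ((A / B) * (- theta (A / (B * D)) p / (A / (B * D))) * theta (A / (C * D)) p * theta A p
          * (- theta (A / (B * C)) p / (A / (B * C))))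
        = (A / (E * F)) * theta A p * theta (A / (C * D)) p * theta (A / (B * D)) p * theta (A / (B * C)) p"
    proof -
      have s: "(N / A) * (A / B) * (B * D / A) * (B * C / A) = A / (E * F)"
      proof -
        have "(N / A) * (A / B) * (B * D / A) * (B * C / A) = N * (B * C * D) / (A * A)"
          using nz by (simp add: field_simps)
        also have "\<dots> = A / (E * F)" unfolding BCD using nz
          by (simp add: field_simps power3_eq_cube)
        finally show ?thesis .
      qed
      have "(N / A) * ((A / B) * (- theta (A / (B * D)) p / (A / (B * D))) * theta (A / (C * D)) p * theta A p
          * (- theta (A / (B * C)) p / (A / (B * C))))
          = ((N / A) * (A / B) * (B * D / A) * (B * C / A))
            * theta A p * theta (A / (C * D)) p * theta (A / (B * D)) p * theta (A / (B * C)) p"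
        using nz by (simp add: field_simps)
      thus ?thesis unfolding s .
    qed
    have "(N / A) * (theta B p * theta C p * theta D p * theta (E * F * N / A) p
        - X * theta (A / D) p * theta (A / C) p * theta (A / B) p)
        = (A / (E * F)) * theta A p * theta (A / (C * D)) p * theta (A / (B * D)) p * theta (A / (B * C)) p"
      unfolding e c ..
    thus ?thesis by (simp add: algebra_simps)
  qed
  show ?thesis
    by (rule alg_step[OF nz(1) nz(5) nz(6) nz(7) nz(10) nz(11) n1 n2(1) n2(2) n2(3) n3 r1 R W1 W2])
qed




theorem mainTheorem6:
  fixes p a b c d e f q r s t u v w :: complex and n :: nat
  assumes hp: "norm p < 1"
    and nz: "a \<noteq> 0" "b \<noteq> 0" "c \<noteq> 0" "d \<noteq> 0" "e \<noteq> 0" "f \<noteq> 0"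
            "q \<noteq> 0" "r \<noteq> 0" "s \<noteq> 0" "t \<noteq> 0" "u \<noteq> 0" "v \<noteq> 0" "w \<noteq> 0"
    and bal1: "a ^ 3 * v ^ n = b * c * d * e * f"
    and bal2: "w ^ 3 = q * r * s * t * u * v"
    and wd1: "\<forall>k\<le>n. theta a p * theta (a / (e * f)) p * theta (a ^ 2 / (b * c * d * e)) p
                 * theta (a ^ 2 / (b * c * d * f)) p * theta (a ^ 2 * (t * u * v / w) ^ k / (b * c * d)) p \<noteq> 0"
    and wd2: "\<forall>k\<le>n. epoch (a / b) (w / q) p k * epoch (a / c) (w / r) p k * epoch (a / d) (w / s) p k
                 * epoch (a * w / (e * t)) (w / t) p k * epoch (a * w / (f * u)) (w / u) p k
                 * epoch (a * w * (v powi (int n - 1))) (w / v) p k \<noteq> 0"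
    and wd3: "\<forall>k\<le>n. theta (a * (w / q) ^ k / b) p * theta (a * (w / r) ^ k / c) p
                 * theta (a * (w / s) ^ k / d) p \<noteq> 0"
    and wd4: "\<forall>k\<le>n. theta (f * (u / w) ^ k * (v powi (int k - int n)) / a) p
                 * theta (e * (t / w) ^ k * (v powi (int k - int n)) / a) p
                 * theta (e * f * (t * u / w) ^ k / a) p \<noteq> 0"
    and wd5: "theta (e * inverse (v ^ n) / a) p * theta (f * inverse (v ^ n) / a) p
                 * theta a p * theta (a / (e * f)) p \<noteq> 0"
  shows "(\<Sum>k\<le>n.
      (theta (a * w ^ k) p * theta (a * (w / (t * u)) ^ k / (e * f)) p
        * theta (a ^ 2 * (u * v / w) ^ k / (b * c * d * e)) p
        * theta (a ^ 2 * (t * v / w) ^ k / (b * c * d * f)) p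
        * theta (a ^ 2 / (b * c * d)) p)
      / (theta a p * theta (a / (e * f)) p * theta (a ^ 2 / (b * c * d * e)) p
        * theta (a ^ 2 / (b * c * d * f)) p * theta (a ^ 2 * (t * u * v / w) ^ k / (b * c * d)) p)
    * ((epoch b q p k * epoch c r p k * epoch d s p k * epoch e t p k * epoch f u p k
        * epoch (inverse (v ^ n)) v p k)
      / (epoch (a / b) (w / q) p k * epoch (a / c) (w / r) p k * epoch (a / d) (w / s) p k
        * epoch (a * w / (e * t)) (w / t) p k * epoch (a * w / (f * u)) (w / u) p k
        * epoch (a * w * (v powi (int n - 1))) (w / v) p k))
    * (w / v) ^ k
    * (1 - (theta (a * (w / (r * s)) ^ k / (c * d)) p * theta (a * (w / (q * s)) ^ k / (b * d)) p
            * theta (a * (w / (q * r)) ^ k / (b * c)) p)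
          / (theta (a * (w / q) ^ k / b) p * theta (a * (w / r) ^ k / c) p
            * theta (a * (w / s) ^ k / d) p)
        * ((theta (e * t ^ k) p * theta (f * u ^ k) p * theta (v powi (int k - int n)) p)
          / (theta (f * (u / w) ^ k * (v powi (int k - int n)) / a) p
            * theta (e * (t / w) ^ k * (v powi (int k - int n)) / a) p
            * theta (e * f * (t * u / w) ^ k / a) p))))
    = (theta (a / e) p * theta (a / f) p * theta (inverse (v ^ n) / a) p
        * theta (e * f * inverse (v ^ n) / a) p)
      / (theta (e * inverse (v ^ n) / a) p * theta (f * inverse (v ^ n) / a) p
        * theta a p * theta (a / (e * f)) p)"

proof -
  define EN where "EN = (\<lambda>k. epoch b q p k * epoch c r p k * epoch d s p k * epoch e t p k * epoch f u p k
        * epoch (inverse (v ^ n)) v p k)"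
  define ED where "ED = (\<lambda>k. epoch (a / b) (w / q) p k * epoch (a / c) (w / r) p k * epoch (a / d) (w / s) p k
        * epoch (a * w / (e * t)) (w / t) p k * epoch (a * w / (f * u)) (w / u) p k
        * epoch (a * w * (v powi (int n - 1))) (w / v) p k)"
  define c0 where "c0 = theta (a ^ 2 / (b * c * d)) p / (theta a p * theta (a / (e * f)) p
        * theta (a ^ 2 / (b * c * d * e)) p * theta (a ^ 2 / (b * c * d * f)) p)"
  define U where "U = (\<lambda>k. c0 * (EN k / ED k) * (w / v) ^ k * (theta (a * w ^ k / (e * t ^ k)) p
        * theta (a * w ^ k / (f * u ^ k)) p * theta (inverse (v ^ n) * v ^ k / (a * w ^ k)) p))"
  define S where "S = (\<lambda>k::nat. (theta (a * w ^ k) p * theta (a * (w / (t * u)) ^ k / (e * f)) p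
        * theta (a ^ 2 * (u * v / w) ^ k / (b * c * d * e)) p
        * theta (a ^ 2 * (t * v / w) ^ k / (b * c * d * f)) p
        * theta (a ^ 2 / (b * c * d)) p)
      / (theta a p * theta (a / (e * f)) p * theta (a ^ 2 / (b * c * d * e)) p
        * theta (a ^ 2 / (b * c * d * f)) p * theta (a ^ 2 * (t * u * v / w) ^ k / (b * c * d)) p)
    * ((epoch b q p k * epoch c r p k * epoch d s p k * epoch e t p k * epoch f u p k
        * epoch (inverse (v ^ n)) v p k)
      / (epoch (a / b) (w / q) p k * epoch (a / c) (w / r) p k * epoch (a / d) (w / s) p k
        * epoch (a * w / (e * t)) (w / t) p k * epoch (a * w / (f * u)) (w / u) p k
        * epoch (a * w * (v powi (int n - 1))) (w / v) p k))
    * (w / v) ^ k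
    * (1 - (theta (a * (w / (r * s)) ^ k / (c * d)) p * theta (a * (w / (q * s)) ^ k / (b * d)) p
            * theta (a * (w / (q * r)) ^ k / (b * c)) p)
          / (theta (a * (w / q) ^ k / b) p * theta (a * (w / r) ^ k / c) p
            * theta (a * (w / s) ^ k / d) p)
        * ((theta (e * t ^ k) p * theta (f * u ^ k) p * theta (v powi (int k - int n)) p)
          / (theta (f * (u / w) ^ k * (v powi (int k - int n)) / a) p
            * theta (e * (t / w) ^ k * (v powi (int k - int n)) / a) p
            * theta (e * f * (t * u / w) ^ k / a) p))))"
  have N0: "inverse (v ^ n) \<noteq> 0" using nz by simp
  have a3: "a ^ 3 = b * c * d * e * f * inverse (v ^ n)" using bal1 nz by (simp add: field_simps)
  have eps: "epoch x y p (Suc k) = epoch x y p k * theta (x * y ^ k) p" for x y k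
    unfolding epoch_def by simp
  have al: "a ^ 2 / (b * c * d * e) = f * inverse (v ^ n) / a"
    using a3 nz by (simp add: field_simps power2_eq_square power3_eq_cube)
  have be: "a ^ 2 / (b * c * d * f) = e * inverse (v ^ n) / a"
    using a3 nz by (simp add: field_simps power2_eq_square power3_eq_cube)
  have ga: "a ^ 2 / (b * c * d) = e * f * inverse (v ^ n) / a"
    using a3 nz by (simp add: field_simps power2_eq_square power3_eq_cube)
  have w3k: "(w ^ k) ^ 3 = q ^ k * r ^ k * s ^ k * t ^ k * u ^ k * v ^ k" for k
  proof -
    have "(w ^ k) ^ 3 = (w ^ 3) ^ k" by (simp add: power_mult[symmetric] mult.commute)
    also have "\<dots> = q ^ k * r ^ k * s ^ k * t ^ k * u ^ k * v ^ k" unfolding bal2 by (simp add: power_mult_distrib)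
    finally show ?thesis .
  qed
  have C1: "S k = U k - U (Suc k)" if k: "k < n" for k
  proof -
    define A where "A = a * w ^ k"
    define B where "B = b * q ^ k"
    define C where "C = c * r ^ k"
    define D where "D = d * s ^ k"
    define E where "E = e * t ^ k"
    define F where "F = f * u ^ k"
    define Nn where "Nn = inverse (v ^ n) * v ^ k"
    have nzA: "A \<noteq> 0" "B \<noteq> 0" "C \<noteq> 0" "D \<noteq> 0" "E \<noteq> 0" "F \<noteq> 0" "Nn \<noteq> 0"
      unfolding A_def B_def C_def D_def E_def F_def Nn_def using nz by auto
    have balA: "A ^ 3 = B * C * D * E * F * Nn"
    proof -
      have "A ^ 3 = a ^ 3 * (w ^ k) ^ 3" unfolding A_def by (simp add: power_mult_distrib)
      also have "\<dots> = (b * c * d * e * f * inverse (v ^ n)) * (q ^ k * r ^ k * s ^ k * t ^ k * u ^ k * v ^ k)"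
        unfolding a3 w3k ..
      also have "\<dots> = B * C * D * E * F * Nn" unfolding B_def C_def D_def E_def F_def Nn_def
        by (simp add: ac_simps)
      finally show ?thesis .
    qed
    have h1: "a * (w / (t * u)) ^ k / (e * f) = A / (E * F)"
      unfolding A_def E_def F_def using nz by (simp add: field_simps power_divide power_mult_distrib)
    have h2: "a ^ 2 * (u * v / w) ^ k / (b * c * d * e) = F * Nn / A"
    proof -
      have "a ^ 2 * (u * v / w) ^ k / (b * c * d * e) = (a ^ 2 / (b * c * d * e)) * (u * v / w) ^ k" by simp
      also have "\<dots> = F * Nn / A" unfolding al A_def F_def Nn_def using nz
        by (simp add: field_simps power_divide power_mult_distrib)
      finally show ?thesis .
    qed
    have h3: "a ^ 2 * (t * v / w) ^ k / (b * c * d * f) = E * Nn / A"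
    proof -
      have "a ^ 2 * (t * v / w) ^ k / (b * c * d * f) = (a ^ 2 / (b * c * d * f)) * (t * v / w) ^ k" by simp
      also have "\<dots> = E * Nn / A" unfolding be A_def E_def Nn_def using nz
        by (simp add: field_simps power_divide power_mult_distrib)
      finally show ?thesis .
    qed
    have h4: "a ^ 2 * (t * u * v / w) ^ k / (b * c * d) = E * F * Nn / A"
    proof -
      have "a ^ 2 * (t * u * v / w) ^ k / (b * c * d) = (a ^ 2 / (b * c * d)) * (t * u * v / w) ^ k" by simp
      also have "\<dots> = E * F * Nn / A" unfolding ga A_def E_def F_def Nn_def using nz
        by (simp add: field_simps power_divide power_mult_distrib)
      finally show ?thesis .
    qed
    have h5: "a * (w / (r * s)) ^ k / (c * d) = A / (C * D)"
      unfolding A_def C_def D_def using nz by (simp add: field_simps power_divide power_mult_distrib)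
    have h6: "a * (w / (q * s)) ^ k / (b * d) = A / (B * D)"
      unfolding A_def B_def D_def using nz by (simp add: field_simps power_divide power_mult_distrib)
    have h7: "a * (w / (q * r)) ^ k / (b * c) = A / (B * C)"
      unfolding A_def B_def C_def using nz by (simp add: field_simps power_divide power_mult_distrib)
    have h8: "a * (w / q) ^ k / b = A / B"
      unfolding A_def B_def using nz by (simp add: field_simps power_divide)
    have h9: "a * (w / r) ^ k / c = A / C"
      unfolding A_def C_def using nz by (simp add: field_simps power_divide)
    have h10: "a * (w / s) ^ k / d = A / D"
      unfolding A_def D_def using nz by (simp add: field_simps power_divide)
    have h12: "v powi (int k - int n) = Nn"
      unfolding Nn_def using nz by (simp add: power_int_diff field_simps)
    have h13: "f * (u / w) ^ k * Nn / a = F * Nn / A"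
      unfolding A_def F_def using nz by (simp add: field_simps power_divide)
    have h14: "e * (t / w) ^ k * Nn / a = E * Nn / A"
      unfolding A_def E_def using nz by (simp add: field_simps power_divide)
    have h15: "e * f * (t * u / w) ^ k / a = E * F / A"
      unfolding A_def E_def F_def using nz by (simp add: field_simps power_divide power_mult_distrib)
    have h16: "a * w ^ k = A" "e * t ^ k = E" "f * u ^ k = F"
      unfolding A_def E_def F_def by simp_all
    have SS: "S k = (theta A p * theta (A / (E * F)) p * theta (F * Nn / A) p * theta (E * Nn / A) p
          * theta (a ^ 2 / (b * c * d)) p)
        / (theta a p * theta (a / (e * f)) p * theta (a ^ 2 / (b * c * d * e)) p
          * theta (a ^ 2 / (b * c * d * f)) p * theta (E * F * Nn / A) p)
        * (EN k / ED k) * (w / v) ^ k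
        * (1 - theta (A / (C * D)) p * theta (A / (B * D)) p * theta (A / (B * C)) p
            / (theta (A / B) p * theta (A / C) p * theta (A / D) p)
            * (theta E p * theta F p * theta Nn p
              / (theta (F * Nn / A) p * theta (E * Nn / A) p * theta (E * F / A) p)))"
      unfolding S_def EN_def ED_def by (simp only: h1 h2 h3 h4 h5 h6 h7 h8 h9 h10 h12 h13 h14 h15 h16)
    also have "\<dots> = c0 * (EN k / ED k) * (w / v) ^ k
        * (theta A p * theta (A / (E * F)) p * theta (F * Nn / A) p * theta (E * Nn / A) p
           / theta (E * F * Nn / A) p
        * (1 - theta (A / (C * D)) p * theta (A / (B * D)) p * theta (A / (B * C)) p
            / (theta (A / B) p * theta (A / C) p * theta (A / D) p)
            * (theta E p * theta F p * theta Nn p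
              / (theta (F * Nn / A) p * theta (E * Nn / A) p * theta (E * F / A) p))))"
      unfolding c0_def by (simp add: divide_inverse inverse_mult_distrib mult_ac)
    finally have SS': "S k = \<dots>" .
    have wd3k: "theta (A / B) p \<noteq> 0" "theta (A / C) p \<noteq> 0" "theta (A / D) p \<noteq> 0"
      using wd3[rule_format, of k] k unfolding h8 h9 h10 by auto
    have wd1k: "theta (E * F * Nn / A) p \<noteq> 0"
      using wd1[rule_format, of k] k unfolding h4 by auto
    have wd4k: "theta (F * Nn / A) p \<noteq> 0" "theta (E * Nn / A) p \<noteq> 0" "theta (E * F / A) p \<noteq> 0"
      using wd4[rule_format, of k] k unfolding h12 h13 h14 h15 by auto
    have x1: "a * w / (e * t) * (w / t) ^ k = A * w / (E * t)"
      unfolding A_def E_def using nz by (simp add: field_simps power_divide)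
    have x2: "a * w / (f * u) * (w / u) ^ k = A * w / (F * u)"
      unfolding A_def F_def using nz by (simp add: field_simps power_divide)
    have x3: "a * w * (v powi (int n - 1)) * (w / v) ^ k = A * w / (v * Nn)"
      unfolding A_def Nn_def using nz by (simp add: field_simps power_divide power_int_diff)
    have x4: "a / b * (w / q) ^ k = A / B" unfolding A_def B_def using nz by (simp add: field_simps power_divide)
    have x5: "a / c * (w / r) ^ k = A / C" unfolding A_def C_def using nz by (simp add: field_simps power_divide)
    have x6: "a / d * (w / s) ^ k = A / D" unfolding A_def D_def using nz by (simp add: field_simps power_divide)
    have wd2k: "theta (A * w / (E * t)) p \<noteq> 0" "theta (A * w / (F * u)) p \<noteq> 0" "theta (A * w / (v * Nn)) p \<noteq> 0"
      using wd2[rule_format, of "Suc k"] k unfolding eps x1 x2 x3 by auto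
    have ENs: "EN (Suc k) = EN k * (theta B p * theta C p * theta D p * theta E p * theta F p * theta Nn p)"
      unfolding EN_def eps B_def C_def D_def E_def F_def Nn_def by (simp add: ac_simps)
    have EDs: "ED (Suc k) = ED k * (theta (A / B) p * theta (A / C) p * theta (A / D) p
        * theta (A * w / (E * t)) p * theta (A * w / (F * u)) p * theta (A * w / (v * Nn)) p)"
      unfolding ED_def eps x1 x2 x3 x4 x5 x6 by (simp add: ac_simps)
    have y1: "a * w ^ Suc k / (e * t ^ Suc k) = A * w / (E * t)" unfolding A_def E_def by (simp add: ac_simps)
    have y2: "a * w ^ Suc k / (f * u ^ Suc k) = A * w / (F * u)" unfolding A_def F_def by (simp add: ac_simps)
    have y3: "inverse (v ^ n) * v ^ Suc k / (a * w ^ Suc k) = Nn * v / (A * w)"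
      unfolding A_def Nn_def by (simp add: ac_simps)
    have UU: "U k = c0 * (EN k / ED k) * (w / v) ^ k * (theta (A / E) p * theta (A / F) p * theta (Nn / A) p)"
      unfolding U_def A_def E_def F_def Nn_def ..
    have UU1: "U (Suc k) = c0 * (EN k / ED k) * (w / v) ^ k *
        ((theta B p * theta C p * theta D p * theta E p * theta F p * theta Nn p)
          / (theta (A / B) p * theta (A / C) p * theta (A / D) p * theta (A * w / (E * t)) p
             * theta (A * w / (F * u)) p * theta (A * w / (v * Nn)) p)
          * (w / v) * (theta (A * w / (E * t)) p * theta (A * w / (F * u)) p * theta (Nn * v / (A * w)) p))"
      unfolding U_def y1 y2 y3 ENs EDs by (simp add: divide_inverse inverse_mult_distrib mult_ac)
    have st: "theta (A / E) p * theta (A / F) p * theta (Nn / A) p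
      - (theta B p * theta C p * theta D p * theta E p * theta F p * theta Nn p)
        / (theta (A / B) p * theta (A / C) p * theta (A / D) p * theta (A * w / (E * t)) p
           * theta (A * w / (F * u)) p * theta (A * w / (v * Nn)) p)
        * (w / v) * (theta (A * w / (E * t)) p * theta (A * w / (F * u)) p * theta (Nn * v / (A * w)) p)
    = theta A p * theta (A / (E * F)) p * theta (F * Nn / A) p * theta (E * Nn / A) p / theta (E * F * Nn / A) p
      * (1 - theta (A / (C * D)) p * theta (A / (B * D)) p * theta (A / (B * C)) p
             / (theta (A / B) p * theta (A / C) p * theta (A / D) p)
           * (theta E p * theta F p * theta Nn p
              / (theta (F * Nn / A) p * theta (E * Nn / A) p * theta (E * F / A) p)))"
      by (rule step_identity[OF hp nzA(1-7) nz(10) nz(11) nz(12) nz(13) balA wd3k wd2k wd1k wd4k])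
    show ?thesis unfolding SS' UU UU1 st[symmetric] by (simp add: right_diff_distrib)
  qed
  have Un1: "U (Suc n) = 0"
  proof -
    have "epoch (inverse (v ^ n)) v p (Suc n) = 0"
      unfolding eps using theta_1[OF hp] nz by simp
    hence "EN (Suc n) = 0" unfolding EN_def by simp
    thus ?thesis unfolding U_def by simp
  qed
  have C2: "S n = U n - U (Suc n)"
  proof -
    define A where "A = a * w ^ n"
    define E where "E = e * t ^ n"
    define F where "F = f * u ^ n"
    have nzA: "A \<noteq> 0" "E \<noteq> 0" "F \<noteq> 0" unfolding A_def E_def F_def using nz by auto
    have vn: "inverse (v ^ n) * v ^ n = 1" using nz by simp
    have h1: "a * (w / (t * u)) ^ n / (e * f) = A / (E * F)"
      unfolding A_def E_def F_def using nz by (simp add: field_simps power_divide power_mult_distrib)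
    have h2: "a ^ 2 * (u * v / w) ^ n / (b * c * d * e) = F / A"
    proof -
      have "a ^ 2 * (u * v / w) ^ n / (b * c * d * e) = (a ^ 2 / (b * c * d * e)) * (u * v / w) ^ n" by simp
      also have "\<dots> = F / A" unfolding al A_def F_def using nz
        by (simp add: field_simps power_divide power_mult_distrib)
      finally show ?thesis .
    qed
    have h3: "a ^ 2 * (t * v / w) ^ n / (b * c * d * f) = E / A"
    proof -
      have "a ^ 2 * (t * v / w) ^ n / (b * c * d * f) = (a ^ 2 / (b * c * d * f)) * (t * v / w) ^ n" by simp
      also have "\<dots> = E / A" unfolding be A_def E_def using nz
        by (simp add: field_simps power_divide power_mult_distrib)
      finally show ?thesis .
    qed
    have h4: "a ^ 2 * (t * u * v / w) ^ n / (b * c * d) = E * F / A"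
    proof -
      have "a ^ 2 * (t * u * v / w) ^ n / (b * c * d) = (a ^ 2 / (b * c * d)) * (t * u * v / w) ^ n" by simp
      also have "\<dots> = E * F / A" unfolding ga A_def E_def F_def using nz
        by (simp add: field_simps power_divide power_mult_distrib)
      finally show ?thesis .
    qed
    have h15: "e * f * (t * u / w) ^ n / a = E * F / A"
      unfolding A_def E_def F_def using nz by (simp add: field_simps power_divide power_mult_distrib)
    have h16: "a * w ^ n = A" unfolding A_def by simp
    have t1: "theta (v powi (int n - int n)) p = 0" using theta_1[OF hp] by simp
    have wdn: "theta (E * F / A) p \<noteq> 0" using wd4[rule_format, of n] unfolding h15 by auto
    have wd1n: "theta (E * F / A) p \<noteq> 0" using wd1[rule_format, of n] unfolding h4 by auto
    have SS: "S n = (theta A p * theta (A / (E * F)) p * theta (F / A) p * theta (E / A) p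
          * theta (a ^ 2 / (b * c * d)) p)
        / (theta a p * theta (a / (e * f)) p * theta (a ^ 2 / (b * c * d * e)) p
          * theta (a ^ 2 / (b * c * d * f)) p * theta (E * F / A) p)
        * (EN n / ED n) * (w / v) ^ n"
      unfolding S_def EN_def ED_def by (simp only: h1 h2 h3 h4 h16 t1) simp
    have UU: "U n = c0 * (EN n / ED n) * (w / v) ^ n * (theta (A / E) p * theta (A / F) p * theta (1 / A) p)"
      unfolding U_def A_def E_def F_def vn by simp
    have i1: "theta (A / E) p = - theta (E / A) p / (E / A)"
      using theta_inv'[OF hp, of "E / A" "A / E"] nzA by simp
    have i2: "theta (A / F) p = - theta (F / A) p / (F / A)"
      using theta_inv'[OF hp, of "F / A" "A / F"] nzA by simp
    have i3: "theta (1 / A) p = - theta A p / A" by (rule theta_inv[OF hp nzA(1)])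
    have i4: "theta (A / (E * F)) p = - theta (E * F / A) p / (E * F / A)"
      using theta_inv'[OF hp, of "E * F / A" "A / (E * F)"] nzA by simp
    have "S n = U n"
      unfolding SS UU c0_def i1 i2 i3 i4 using nzA wdn by (simp add: field_simps)
    thus ?thesis using Un1 by simp
  qed
  have C3: "U 0 = (theta (a / e) p * theta (a / f) p * theta (inverse (v ^ n) / a) p
        * theta (e * f * inverse (v ^ n) / a) p)
      / (theta (e * inverse (v ^ n) / a) p * theta (f * inverse (v ^ n) / a) p
        * theta a p * theta (a / (e * f)) p)"
  proof -
    have "EN 0 = 1" "ED 0 = 1" unfolding EN_def ED_def epoch_def by simp_all
    hence "U 0 = c0 * (theta (a / e) p * theta (a / f) p * theta (inverse (v ^ n) / a) p)"
      unfolding U_def by simp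
    also have "\<dots> = (theta (a / e) p * theta (a / f) p * theta (inverse (v ^ n) / a) p
        * theta (e * f * inverse (v ^ n) / a) p)
      / (theta (e * inverse (v ^ n) / a) p * theta (f * inverse (v ^ n) / a) p
        * theta a p * theta (a / (e * f)) p)"
      unfolding c0_def al be ga by (simp add: divide_inverse inverse_mult_distrib mult_ac)
    finally show ?thesis .
  qed
  have "(\<Sum>k\<le>n. S k) = (\<Sum>k\<le>n. U k - U (Suc k))"
  proof (rule sum.cong)
    fix k assume "k \<in> {..n}"
    hence "k < n \<or> k = n" by auto
    thus "S k = U k - U (Suc k)" using C1 C2 by auto
  qed simp
  also have "\<dots> = U 0 - U (Suc n)" by (rule sum_telescope)
  also have "\<dots> = U 0" using Un1 by simp
  finally have "(\<Sum>k\<le>n. S k) = U 0" .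
  thus ?thesis unfolding S_def C3 .
qed


end
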